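(* Let $p(x)=\prod_{j=1}^m (x-\alpha_j)^{b_j}$ where $\alpha_1,\dots,\alpha_m$ are distinct negative real numbers, $b_j\in\mathbb N$, and let $\alpha_1$ be the largest of them. Let $q$ be a polynomial with real coefficients, $\deg(q)<\deg(p)$, having no common roots with $p$. If $(q(n)/p(n))_{n\in\mathbb Z_+}$ is a Hausdorff moment sequence, then $q(\alpha_1)>0$. Conversely, if $q$ is monic of degree $1$ and $q(\alpha_1)>0$, then $(q(n)/p(n))_{n\in\mathbb Z_+}$ is a Hausdorff moment sequence.
   Context: A sequence $(x_n)_{n\in\mathbb Z_+}$ of positive numbers is a Hausdorff moment sequence if there is a positive Radon measure $\mu$ on $[0,1]$ with $x_n=\int_0^1 t^n\,d\mu(t)$ for all $n\in\mathbb Z_+$. *)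

theory Defs
  imports "HOL-Analysis.Analysis" "HOL-Computational_Algebra.Polynomial"
begin

text \<open>Radon measures on the compact set [0,1] are exactly the finite Borel measures.\<close>
definition hausdorff_moment_seq :: "(nat \<Rightarrow> real) \<Rightarrow> bool" where
  "hausdorff_moment_seq x \<longleftrightarrow>
     (\<forall>n. x n > 0) \<and>
     (\<exists>M :: real measure.
        space M = {0..1} \<and> sets M = sets (restrict_space borel {0..1}) \<and>
        finite_measure M \<and>
        (\<forall>n. integrable M (\<lambda>t. t ^ n) \<and> x n = (\<integral>t. t ^ n \<partial>M)))"

end

theory Submission
  imports Defs
begin

definition HM :: "(nat \<Rightarrow> real) \<Rightarrow> bool" where
  "HM x \<longleftrightarrow> (\<exists>M :: real measure.
        space M = {0..1} \<and> sets M = sets (restrict_space borel {0..1}) \<and>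
        finite_measure M \<and>
        (\<forall>n. integrable M (\<lambda>t. t ^ n) \<and> x n = (\<integral>t. t ^ n \<partial>M)))"

lemma HM_mult:
  assumes "HM x" "HM y"
  shows "HM (\<lambda>n. x n * y n)"
proof -
  obtain M where M: "space M = {0..1}" "sets M = sets (restrict_space borel {0..1})"
     "finite_measure M" "\<And>n. integrable M (\<lambda>t. t ^ n)" "\<And>n. x n = (\<integral>t. t ^ n \<partial>M)"
    using assms(1) unfolding HM_def by blast
  obtain N where N: "space N = {0..1}" "sets N = sets (restrict_space borel {0..1})"
     "finite_measure N" "\<And>n. integrable N (\<lambda>t. t ^ n)" "\<And>n. y n = (\<integral>t. t ^ n \<partial>N)"
    using assms(2) unfolding HM_def by blast
  interpret M: finite_measure M by fact
  interpret N: finite_measure N by fact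
  interpret P: pair_sigma_finite M N by unfold_locales
  interpret MN: finite_measure "M \<Otimes>\<^sub>M N"
    by (rule finite_measure_pair_measure) unfold_locales
  have idM: "(\<lambda>s::real. s) \<in> borel_measurable M"
    by (subst measurable_cong_sets[OF M(2) refl]) (rule measurable_restrict_space1, simp)
  have idN: "(\<lambda>s::real. s) \<in> borel_measurable N"
    by (subst measurable_cong_sets[OF N(2) refl]) (rule measurable_restrict_space1, simp)
  have bm: "(\<lambda>z. fst z * snd z) \<in> borel_measurable (M \<Otimes>\<^sub>M N)"
    by (intro borel_measurable_times measurable_compose[OF measurable_fst idM] measurable_compose[OF measurable_snd idN])
  have meas: "(\<lambda>(s,t). s * t) \<in> measurable (M \<Otimes>\<^sub>M N) (restrict_space borel {0..1::real})"
    using bm by (intro measurable_restrict_space2) (auto simp: case_prod_beta space_pair_measure M(1) N(1) mult_le_one)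
  define P where "P = distr (M \<Otimes>\<^sub>M N) (restrict_space borel {0..1::real}) (\<lambda>(s,t). s * t)"
  have intpow: "integrable (M \<Otimes>\<^sub>M N) (\<lambda>z. (fst z * snd z)^n)" for n
  proof (rule MN.integrable_const_bound[where B=1])
    show "AE z in M \<Otimes>\<^sub>M N. norm ((fst z * snd z) ^ n) \<le> 1"
      by (intro AE_I2) (auto simp: space_pair_measure M(1) N(1) abs_mult power_le_one mult_le_one)
    show "(\<lambda>z. (fst z * snd z) ^ n) \<in> borel_measurable (M \<Otimes>\<^sub>M N)"
      using bm by simp
  qed
  show ?thesis unfolding HM_def
  proof (intro exI[of _ P] conjI allI)
    show "space P = {0..1}" unfolding P_def by simp
    show "sets P = sets (restrict_space borel {0..1})" unfolding P_def by simp
    show "finite_measure P" unfolding P_def by (rule MN.finite_measure_distr[OF meas])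
    fix n
    show "integrable P (\<lambda>t. t ^ n)" unfolding P_def
      using intpow[of n] meas by (subst integrable_distr_eq) (auto simp: case_prod_beta intro: measurable_restrict_space1)
    have "(\<integral>t. t ^ n \<partial>P) = (\<integral>z. (case z of (s,t) \<Rightarrow> s * t) ^ n \<partial>(M \<Otimes>\<^sub>M N))"
      unfolding P_def by (rule integral_distr[OF meas]) (auto intro: measurable_restrict_space1)
    also have "\<dots> = (\<integral>s. (\<integral>t. s^n * t^n \<partial>N) \<partial>M)"
      using P.integral_fst[of "\<lambda>s t. s^n * t^n"] intpow[of n]
      by (simp add: split_beta' power_mult_distrib)
    also have "\<dots> = (\<integral>s. s^n * y n \<partial>M)" by (simp add: N(5))
    also have "\<dots> = x n * y n" by (simp add: M(5))
    finally show "x n * y n = (\<integral>t. t ^ n \<partial>P)" by simp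
  qed
qed

lemma HM_one: "HM (\<lambda>n. 1)"
proof -
  define B where "B = restrict_space lborel {0..1::real}"
  have finB: "finite_measure B"
    unfolding B_def by (rule finite_measureI) (simp add: emeasure_restrict_space)
  interpret B: finite_measure B by fact
  have meas: "(\<lambda>_. 1::real) \<in> measurable B (restrict_space borel {0..1})"
    by (intro measurable_restrict_space2) auto
  define P where "P = distr B (restrict_space borel {0..1::real}) (\<lambda>_. 1)"
  show ?thesis unfolding HM_def
  proof (intro exI[of _ P] conjI allI)
    show "space P = {0..1}" unfolding P_def by simp
    show "sets P = sets (restrict_space borel {0..1})" unfolding P_def by simp
    show "finite_measure P" unfolding P_def by (rule B.finite_measure_distr[OF meas])
    fix n
    show "integrable P (\<lambda>t. t ^ n)" unfolding P_def
      using meas by (subst integrable_distr_eq) (auto intro: measurable_restrict_space1)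
    have "(\<integral>t. t ^ n \<partial>P) = (\<integral>s. 1 \<partial>B)"
      unfolding P_def by (subst integral_distr[OF meas]) (auto intro: measurable_restrict_space1)
    also have "\<dots> = 1" unfolding B_def by (simp add: measure_restrict_space)
    finally show "1 = (\<integral>t. t ^ n \<partial>P)" by simp
  qed
qed

lemma HM_basic:
  fixes K L a :: real
  assumes K: "K \<ge> 0" and L: "L > 0" and a: "a > 0"
  shows "HM (\<lambda>n. K + L * a / (real n + a))"
proof -
  define \<phi> where "\<phi> = (\<lambda>s::real. min 1 ((s / L) powr (1 / a)))"
  define B where "B = restrict_space lborel {0..L+K}"
  have cont: "continuous_on {0..L+K} \<phi>"
    unfolding \<phi>_def using L a
    by (intro continuous_intros continuous_on_powr') auto
  have contn: "continuous_on {0..L+K} (\<lambda>s. \<phi> s ^ n)" for n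
    by (intro continuous_intros cont)
  have phi_range: "\<phi> s \<in> {0..1}" for s
    unfolding \<phi>_def by auto
  have phi_meas: "\<phi> \<in> borel_measurable borel"
    unfolding \<phi>_def by measurable
  have meas: "\<phi> \<in> measurable B (restrict_space borel {0..1})"
    unfolding B_def using phi_range phi_meas
    by (intro measurable_restrict_space2 measurable_restrict_space1) auto
  have finB: "finite_measure B"
    unfolding B_def
    by (rule finite_measureI) (use L K in \<open>simp add: emeasure_restrict_space\<close>)
  interpret B: finite_measure B by fact
  define P where "P = distr B (restrict_space borel {0..1}) \<phi>"
  have intB: "integrable B (\<lambda>s. \<phi> s ^ n)" for n
  proof (rule B.integrable_const_bound[where B=1])
    show "AE x in B. norm (\<phi> x ^ n) \<le> 1"
      using phi_range by (intro AE_I2) (auto simp: power_abs power_le_one)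
    show "(\<lambda>x. \<phi> x ^ n) \<in> borel_measurable B"
      using meas by (intro borel_measurable_power) (auto intro: measurable_restrict_space3 measurable_restrict_space1 simp: B_def phi_meas)
  qed
  have hint: "((\<lambda>s. \<phi> s ^ n) has_integral (K + L * a / (real n + a))) {0..L+K}" for n
  proof -
    have e: "real n / a > -1" using a by (simp add: less_le_trans[of _ 0])
    have h1: "((\<lambda>s. s powr (real n / a) * (1 / L powr (real n / a))) has_integral
             (L powr (real n / a + 1) / (real n / a + 1) * (1 / L powr (real n / a)))) {0..L}"
      by (rule has_integral_mult_left, rule has_integral_powr_from_0) (use e L in auto)
    have v1: "L powr (real n / a + 1) / (real n / a + 1) * (1 / L powr (real n / a)) = L * a / (real n + a)"
    proof -
      have "L powr (real n / a + 1) = L powr (real n / a) * L" using L by (simp add: powr_add)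
      moreover have "L powr (real n / a) > 0" using L by simp
      ultimately show ?thesis using L a by (simp add: field_simps)
    qed
    have h1': "((\<lambda>s. \<phi> s ^ n) has_integral (L * a / (real n + a))) {0..L}"
    proof (rule has_integral_spike_finite[of "{0}", OF _ _ h1[unfolded v1]])
      fix s assume s: "s \<in> {0..L} - {0}"
      hence s0: "s > 0" "s \<le> L" by auto
      have "(s / L) powr (1 / a) \<le> 1" using s0 L a by (intro powr_le1) auto
      hence "\<phi> s = (s / L) powr (1 / a)" unfolding \<phi>_def by simp
      also have "\<dots> ^ n = (s / L) powr (real n * (1/a))" using s0 L by (subst powr_power) auto
      also have "\<dots> = s powr (real n / a) * (1 / L powr (real n / a))"
        by (simp add: powr_divide)
      finally show "\<phi> s ^ n = s powr (real n / a) * (1 / L powr (real n / a))" .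
    qed auto
    have h2: "((\<lambda>s. \<phi> s ^ n) has_integral K) {L..L+K}"
    proof -
      have "((\<lambda>s. 1::real) has_integral K) {L..L+K}"
        using has_integral_const_real[of "1::real" L "L+K"] K by simp
      moreover have "\<phi> s ^ n = 1" if "s \<in> {L..L+K}" for s
      proof -
        have "1 \<le> (s / L) powr (1 / a)" using that L a by (intro ge_one_powr_ge_zero) auto
        thus ?thesis unfolding \<phi>_def by simp
      qed
      ultimately show ?thesis using has_integral_cong by (metis (no_types, lifting))
    qed
    have "((\<lambda>s. \<phi> s ^ n) has_integral (L * a / (real n + a) + K)) {0..L+K}"
      by (rule has_integral_combine[OF _ _ h1' h2]) (use L K in auto)
    thus ?thesis by (simp add: add.commute)
  qed
  show ?thesis unfolding HM_def
  proof (intro exI[of _ P] conjI allI)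
    show "space P = {0..1}" unfolding P_def by simp
    show "sets P = sets (restrict_space borel {0..1})" unfolding P_def by simp
    show "finite_measure P" unfolding P_def by (rule B.finite_measure_distr[OF meas])
    fix n
    show "integrable P (\<lambda>t. t ^ n)" unfolding P_def
      using intB[of n] meas by (subst integrable_distr_eq) (auto intro: measurable_restrict_space1)
    have "(\<integral>t. t ^ n \<partial>P) = (\<integral>s. \<phi> s ^ n \<partial>B)"
      unfolding P_def by (rule integral_distr[OF meas]) (auto intro: measurable_restrict_space1)
    also have "\<dots> = (LINT s:{0..L+K}|lborel. \<phi> s ^ n)"
      unfolding B_def set_lebesgue_integral_def by (subst integral_restrict_space) auto
    also have "\<dots> = integral {0..L+K} (\<lambda>s. \<phi> s ^ n)"
      by (rule set_borel_integral_eq_integral(2)[OF borel_integrable_atLeastAtMost'[OF contn]])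
    also have "\<dots> = K + L * a / (real n + a)"
      using hint[of n] by (rule integral_unique)
    finally show "K + L * a / (real n + a) = (\<integral>t. t ^ n \<partial>P)" by simp
  qed
qed

lemma HM_diff_nonneg:
  assumes "HM x"
  shows "0 \<le> (\<Sum>k\<le>K. (-1)^k * real (K choose k) * x k)"
proof -
  obtain M where M: "space M = {0..1}" "sets M = sets (restrict_space borel {0..1})"
     "finite_measure M" "\<And>n. integrable M (\<lambda>t. t ^ n)" "\<And>n. x n = (\<integral>t. t ^ n \<partial>M)"
    using assms(1) unfolding HM_def by blast
  have "(\<Sum>k\<le>K. (-1)^k * real (K choose k) * x k) = (\<Sum>k\<le>K. (\<integral>t. (-1)^k * real (K choose k) * t ^ k \<partial>M))"
    by (simp add: M(5))
  also have "\<dots> = (\<integral>t. (\<Sum>k\<le>K. (-1)^k * real (K choose k) * t ^ k) \<partial>M)"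
    by (rule Bochner_Integration.integral_sum[where f="\<lambda>k t. (-1)^k * real (K choose k) * t^k", symmetric]) (simp add: M(4))
  also have "\<dots> = (\<integral>t. (1 - t) ^ K \<partial>M)"
  proof (rule Bochner_Integration.integral_cong[OF refl])
    fix t :: real
    have "(1 - t) ^ K = (-t + 1) ^ K" by simp
    also have "\<dots> = (\<Sum>k\<le>K. real (K choose k) * (-t) ^ k * 1 ^ (K - k))"
      by (rule binomial_ring)
    finally show "(\<Sum>k\<le>K. (-1)^k * real (K choose k) * t ^ k) = (1 - t) ^ K"
      by (simp add: power_minus' mult.commute mult.left_commute)
  qed
  also have "\<dots> \<ge> 0"
    by (rule integral_nonneg_AE) (intro AE_I2, auto simp: M(1))
  finally show ?thesis .
qed

lemma fwd_diff_Suc: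
  fixes g :: "nat \<Rightarrow> real"
  shows "(\<Sum>k\<le>Suc K. (-1)^k * real (Suc K choose k) * g k) =
         (\<Sum>k\<le>K. (-1)^k * real (K choose k) * g k) - (\<Sum>k\<le>K. (-1)^k * real (K choose k) * g (Suc k))"
proof -
  have A: "(\<Sum>k\<le>Suc K. (-1)^k * real (Suc K choose k) * g k) =
        g 0 + (\<Sum>k\<le>K. (-1)^(Suc k) * real (K choose k) * g (Suc k)) +
              (\<Sum>k\<le>K. (-1)^(Suc k) * real (K choose Suc k) * g (Suc k))"
    by (subst sum.atMost_Suc_shift) (simp add: sum.distrib[symmetric] algebra_simps)
  have B: "(\<Sum>k\<le>K. (-1)^k * real (K choose k) * g k) =
        g 0 + (\<Sum>k\<le>K. (-1)^(Suc k) * real (K choose Suc k) * g (Suc k))"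
  proof -
    have "(\<Sum>k\<le>K. (-1)^k * real (K choose k) * g k) = g 0 + (\<Sum>k<K. (-1)^(Suc k) * real (K choose Suc k) * g (Suc k))"
      by (subst sum.atMost_shift) simp
    moreover have "(\<Sum>k\<le>K. (-1)^(Suc k) * real (K choose Suc k) * g (Suc k)) = (\<Sum>k<K. (-1)^(Suc k) * real (K choose Suc k) * g (Suc k))"
      by (simp add: lessThan_Suc_atMost[symmetric])
    ultimately show ?thesis by simp
  qed
  show ?thesis using A B by (simp add: sum_negf[symmetric])
qed

lemma altsum:
  fixes e :: real
  assumes "e > 0"
  shows "(\<Sum>k\<le>K. (-1)^k * real (K choose k) * (1 / (real k + e))) = fact K / pochhammer e (Suc K)"
  using assms
proof (induction K arbitrary: e)
  case 0 thus ?case by simp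
next
  case (Suc K)
  have pe: "pochhammer e (Suc K) > 0" "pochhammer (e+1) (Suc K) > 0"
    using Suc.prems by (auto intro: pochhammer_pos)
  have "(\<Sum>k\<le>Suc K. (-1)^k * real (Suc K choose k) * (1 / (real k + e))) =
        fact K / pochhammer e (Suc K) - fact K / pochhammer (e+1) (Suc K)"
    using fwd_diff_Suc[of K "\<lambda>k. 1 / (real k + e)"] Suc.IH[of e] Suc.IH[of "e+1"] Suc.prems
    by (simp add: add_ac)
  also have "\<dots> = fact (Suc K) / pochhammer e (Suc (Suc K))"
  proof -
    have r1: "pochhammer e (Suc (Suc K)) = e * pochhammer (e+1) (Suc K)"
      by (simp add: pochhammer_rec add_ac)
    have r2: "pochhammer e (Suc (Suc K)) = (e + real (Suc K)) * pochhammer e (Suc K)"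
      by (rule pochhammer_rec')
    have r3: "fact (Suc K) = (real K + 1) * fact K" by simp
    have q1: "fact K / pochhammer e (Suc K) = fact K * (e + real (Suc K)) / pochhammer e (Suc (Suc K))"
      using pe Suc.prems by (simp add: r2)
    have q2: "fact K / pochhammer (e+1) (Suc K) = fact K * e / pochhammer e (Suc (Suc K))"
      using pe Suc.prems by (simp add: r1)
    show ?thesis unfolding q1 q2 r3 by (simp add: diff_divide_distrib[symmetric] algebra_simps)
  qed
  finally show ?case .
qed

lemma altsum':
  fixes e :: real
  assumes "e > 0"
  shows "(\<Sum>k\<le>K. (-1)^k * real (K choose k) / (real k + e)) = fact K / pochhammer e (Suc K)"
  using altsum[OF assms, of K] by simp

lemma poch_ratio_lim:
  fixes e e' :: real
  assumes "0 < e" "e < e'"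
  shows "(\<lambda>K. pochhammer e (Suc K) / pochhammer e' (Suc K)) \<longlonglongrightarrow> 0"
proof -
  have e'pos: "e' > 0" using assms by simp
  have gs: "Gamma_series z n = fact n * exp (z * ln (real n)) / pochhammer z (Suc n)" for z :: real and n
    by (simp add: Gamma_series_def)
  have pz: "pochhammer z (Suc n) > 0" if "z > 0" for z :: real and n using that by (intro pochhammer_pos)
  have eq: "pochhammer e (Suc n) / pochhammer e' (Suc n) =
        real n powr (e - e') * (Gamma_series e' n / Gamma_series e n)" if "n \<ge> 1" for n
  proof -
    have "real n > 0" using that by simp
    hence "real n powr (e - e') = exp (e * ln (real n)) / exp (e' * ln (real n))"
      by (simp add: powr_def exp_diff algebra_simps)
    thus ?thesis using pz[of e n] pz[of e' n] assms e'pos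
      by (simp add: gs field_simps)
  qed
  have lim1: "(\<lambda>n. real n powr (e - e')) \<longlonglongrightarrow> 0"
    using assms by (intro tendsto_neg_powr filterlim_real_sequentially) auto
  have lim2: "(\<lambda>n. Gamma_series e' n / Gamma_series e n) \<longlonglongrightarrow> Gamma e' / Gamma e"
    using assms by (intro tendsto_divide Gamma_series_LIMSEQ) (auto simp: Gamma_real_pos[THEN less_imp_neq, symmetric])
  have "(\<lambda>n. real n powr (e - e') * (Gamma_series e' n / Gamma_series e n)) \<longlonglongrightarrow> 0 * (Gamma e' / Gamma e)"
    by (intro tendsto_mult lim1 lim2)
  hence "(\<lambda>n. real n powr (e - e') * (Gamma_series e' n / Gamma_series e n)) \<longlonglongrightarrow> 0" by simp
  thus ?thesis
    by (rule Lim_transform_eventually) (use eq in \<open>auto simp: eventually_at_top_linorder intro!: exI[of _ 1]\<close>)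
qed

lemma simple_poles_nonneg:
  fixes D :: nat and e r :: "nat \<Rightarrow> real"
  assumes hm: "HM y" and yeq: "\<And>n. y n = (\<Sum>i<D. r i / (real n + e i))"
    and epos: "\<And>i. i < D \<Longrightarrow> e i > 0" and D: "0 < D"
    and emin: "\<And>i. i < D \<Longrightarrow> i \<noteq> 0 \<Longrightarrow> e 0 < e i"
  shows "r 0 \<ge> 0"
proof -
  define T where "T = (\<lambda>K. \<Sum>i<D. r i * (pochhammer (e 0) (Suc K) / pochhammer (e i) (Suc K)))"
  have Tnn: "T K \<ge> 0" for K
  proof -
    have "0 \<le> (\<Sum>k\<le>K. (-1)^k * real (K choose k) * y k)" by (rule HM_diff_nonneg[OF hm])
    also have "\<dots> = (\<Sum>i<D. r i * (\<Sum>k\<le>K. (-1)^k * real (K choose k) * (1 / (real k + e i))))"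
      by (simp add: yeq sum_distrib_left sum_distrib_right sum.swap[of _ "{..K}"] mult_ac)
    also have "\<dots> = (\<Sum>i<D. r i * (fact K / pochhammer (e i) (Suc K)))"
      using epos by (intro sum.cong refl) (simp add: altsum')
    also have "\<dots> = (fact K / pochhammer (e 0) (Suc K)) * T K"
      unfolding T_def using pochhammer_pos[of "e 0" "Suc K"] epos[of 0] D
      by (simp add: sum_distrib_left field_simps)
    finally have "0 \<le> (fact K / pochhammer (e 0) (Suc K)) * T K" .
    moreover have "fact K / pochhammer (e 0) (Suc K) > 0"
      using pochhammer_pos[of "e 0" "Suc K"] epos[of 0] D by simp
    moreover have "fact K > (0::real)" "pochhammer (e 0) (Suc K) > 0"
      using pochhammer_pos[of "e 0" "Suc K"] epos[of 0] D by auto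
    ultimately show ?thesis by (simp add: zero_le_mult_iff zero_le_divide_iff)
  qed
  have "T \<longlonglongrightarrow> (\<Sum>i<D. if i = 0 then r i else 0)"
    unfolding T_def
  proof (intro tendsto_sum)
    fix i assume i: "i \<in> {..<D}"
    show "(\<lambda>K. r i * (pochhammer (e 0) (Suc K) / pochhammer (e i) (Suc K))) \<longlonglongrightarrow> (if i = 0 then r i else 0)"
    proof (cases "i = 0")
      case True
      have "pochhammer (e 0) (Suc K) \<noteq> 0" for K using pochhammer_pos[of "e 0" "Suc K"] epos[of 0] D by simp
      thus ?thesis using True by simp
    next
      case False
      have "(\<lambda>K. r i * (pochhammer (e 0) (Suc K) / pochhammer (e i) (Suc K))) \<longlonglongrightarrow> r i * 0"
        using i False epos[of 0] D emin[of i] by (intro tendsto_mult tendsto_const poch_ratio_lim) auto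
      thus ?thesis using False by simp
    qed
  qed
  hence "T \<longlonglongrightarrow> r 0" using D by (simp add: sum.delta)
  thus ?thesis using Tnn by (intro LIMSEQ_le_const) auto
qed

lemma lagrange:
  fixes q :: "real poly" and e :: "nat \<Rightarrow> real"
  assumes inj: "inj_on e {..<D}" and deg: "degree q < D"
  shows "poly q s = (\<Sum>i<D. (poly q (- e i) / (\<Prod>l\<in>{..<D}-{i}. (e l - e i))) * (\<Prod>l\<in>{..<D}-{i}. (s + e l)))"
proof -
  define c where "c = (\<lambda>i. poly q (- e i) / (\<Prod>l\<in>{..<D}-{i}. (e l - e i)))"
  define Q where "Q = (\<Sum>i<D. smult (c i) (\<Prod>l\<in>{..<D}-{i}. [:e l, 1:]))"
  have polyQ: "poly Q s = (\<Sum>i<D. c i * (\<Prod>l\<in>{..<D}-{i}. (s + e l)))" for s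
    unfolding Q_def by (simp add: poly_sum poly_prod add.commute)
  have degQ: "degree Q \<le> D - 1"
    unfolding Q_def
  proof (rule degree_sum_le)
    fix i assume i: "i \<in> {..<D}"
    have "degree (\<Prod>l\<in>{..<D}-{i}. [:e l, 1:]) \<le> (\<Sum>l\<in>{..<D}-{i}. (degree \<circ> (\<lambda>l. [:e l, 1:])) l)"
      by (rule degree_prod_sum_le) simp
    also have "\<dots> = D - 1" using i by simp
    finally show "degree (smult (c i) (\<Prod>l\<in>{..<D}-{i}. [:e l, 1:])) \<le> D - 1"
      using degree_smult_le order_trans by blast
  qed simp
  have roots: "poly (q - Q) (- e k) = 0" if k: "k < D" for k
  proof -
    have "poly Q (- e k) = (\<Sum>i<D. if i = k then c k * (\<Prod>l\<in>{..<D}-{k}. (e l - e k)) else 0)"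
      unfolding polyQ
    proof (intro sum.cong refl)
      fix i assume i: "i \<in> {..<D}"
      show "c i * (\<Prod>l\<in>{..<D}-{i}. (- e k + e l)) = (if i = k then c k * (\<Prod>l\<in>{..<D}-{k}. (e l - e k)) else 0)"
      proof (cases "i = k")
        case False
        hence "k \<in> {..<D}-{i}" using k by auto
        hence "(\<Prod>l\<in>{..<D}-{i}. (- e k + e l)) = 0"
          by (intro prod_zero) auto
        thus ?thesis using False by simp
      qed simp
    qed
    also have "\<dots> = c k * (\<Prod>l\<in>{..<D}-{k}. (e l - e k))" using k by (simp add: sum.delta)
    also have "\<dots> = poly q (- e k)"
    proof -
      have "(\<Prod>l\<in>{..<D}-{k}. (e l - e k)) \<noteq> 0"
        using inj k by (subst prod_zero_iff) (auto simp: inj_on_def)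
      thus ?thesis unfolding c_def by simp
    qed
    finally show ?thesis by simp
  qed
  have "q - Q = 0"
  proof (rule ccontr)
    assume nz: "q - Q \<noteq> 0"
    have "(\<lambda>k. - e k) ` {..<D} \<subseteq> {x. poly (q - Q) x = 0}" using roots by auto
    moreover have "finite {x. poly (q - Q) x = 0}" using nz by (rule poly_roots_finite)
    ultimately have "card ((\<lambda>k. - e k) ` {..<D}) \<le> card {x. poly (q - Q) x = 0}"
      by (rule card_mono[rotated])
    also have "\<dots> \<le> degree (q - Q)" using nz by (rule card_poly_roots_bound)
    also have "\<dots> \<le> max (degree q) (degree Q)" by (rule degree_diff_le_max)
    also have "\<dots> < D" using deg degQ by auto
    finally have "card ((\<lambda>k. - e k) ` {..<D}) < D" .
    moreover have "card ((\<lambda>k. - e k) ` {..<D}) = D"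
      using inj by (subst card_image) (auto simp: inj_on_def)
    ultimately show False by simp
  qed
  hence "poly q s = poly Q s" by simp
  also have "\<dots> = (\<Sum>i<D. c i * (\<Prod>l\<in>{..<D}-{i}. (s + e l)))" by (rule polyQ)
  finally show ?thesis unfolding c_def .
qed

lemma HM_cong: "HM x \<Longrightarrow> (\<And>n. x n = y n) \<Longrightarrow> HM y"
proof -
  assume "HM x" "\<And>n. x n = y n"
  hence "x = y" by auto
  with \<open>HM x\<close> show "HM y" by simp
qed

lemma HM_power: "HM x \<Longrightarrow> HM (\<lambda>n. x n ^ k)"
  by (induction k) (auto intro: HM_one HM_mult)

lemma HM_prod: "finite A \<Longrightarrow> (\<And>j. j \<in> A \<Longrightarrow> HM (f j)) \<Longrightarrow> HM (\<lambda>n. \<Prod>j\<in>A. f j n)"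
  by (induction A rule: finite_induct) (auto intro: HM_one HM_mult)

lemma HM_ratio:
  fixes c e :: real
  assumes "e > 0" "c \<ge> e"
  shows "HM (\<lambda>n. (real n + c) / (real n + e))"
proof (cases "c = e")
  case True
  show ?thesis
  proof (rule HM_cong[OF HM_one])
    fix n
    have "real n + e > 0" using assms by simp
    thus "1 = (real n + c) / (real n + e)" using True by simp
  qed
next
  case False
  hence ce: "c > e" using assms by simp
  have "HM (\<lambda>n. 1 + ((c - e) / e) * e / (real n + e))"
    by (rule HM_basic) (use ce assms in auto)
  thus ?thesis
  proof (rule HM_cong)
    fix n
    have "real n + e > 0" using assms by simp
    have "((c - e) / e) * e = c - e" using assms by simp
    hence "1 + ((c - e) / e) * e / (real n + e) = 1 + (c - e) / (real n + e)" by simp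
    also have "\<dots> = (real n + c) / (real n + e)" using \<open>real n + e > 0\<close> by (simp add: field_simps)
    finally show "1 + ((c - e) / e) * e / (real n + e) = (real n + c) / (real n + e)" .
  qed
qed

lemma HM_inv:
  fixes e :: real
  assumes "e > 0"
  shows "HM (\<lambda>n. 1 / (real n + e))"
proof -
  have "HM (\<lambda>n. 0 + (1 / e) * e / (real n + e))"
    by (rule HM_basic) (use assms in auto)
  thus ?thesis by (rule HM_cong) (use assms in simp)
qed

lemma hausdorff_iff: "hausdorff_moment_seq x \<longleftrightarrow> (\<forall>n. x n > 0) \<and> HM x"
  unfolding hausdorff_moment_seq_def HM_def by simp

theorem mainTheorem6:
  fixes m :: nat and \<alpha> :: "nat \<Rightarrow> real" and b :: "nat \<Rightarrow> nat"
    and p q :: "real poly"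
  assumes m_pos: "m \<ge> 1"
    and distinct: "inj_on \<alpha> {1..m}"
    and neg: "\<forall>j\<in>{1..m}. \<alpha> j < 0"
    and b_pos: "\<forall>j\<in>{1..m}. b j \<ge> 1"
    and largest: "\<forall>j\<in>{1..m}. \<alpha> j \<le> \<alpha> 1"
    and p_def: "p = (\<Prod>j\<in>{1..m}. [:- \<alpha> j, 1:] ^ b j)"
    and deg: "degree q < degree p"
    and coprime_roots: "\<forall>x. poly p x = 0 \<longrightarrow> poly q x \<noteq> 0"
  shows "(hausdorff_moment_seq (\<lambda>n. poly q (real n) / poly p (real n)) \<longrightarrow> poly q (\<alpha> 1) > 0)
       \<and> ((lead_coeff q = 1 \<and> degree q = 1 \<and> poly q (\<alpha> 1) > 0)
            \<longrightarrow> hausdorff_moment_seq (\<lambda>n. poly q (real n) / poly p (real n)))"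
proof -
  have one_in: "1 \<in> {1..m}" using m_pos by simp
  define a where "a = - \<alpha> 1"
  have apos: "a > 0" using neg one_in by (auto simp: a_def)
  have aj: "\<And>j. j \<in> {1..m} \<Longrightarrow> - \<alpha> j \<ge> a" using largest by (auto simp: a_def)
  have polyp: "poly p x = (\<Prod>j\<in>{1..m}. (x - \<alpha> j) ^ b j)" for x
    unfolding p_def by (simp add: poly_prod)
  have degp: "degree p = (\<Sum>j\<in>{1..m}. b j)"
    unfolding p_def by (subst degree_prod_eq_sum_degree) (auto simp: degree_linear_power)
  have ppos: "poly p (real n) > 0" for n
    unfolding polyp using neg by (intro prod_pos) (auto intro!: zero_less_power simp: less_le_trans[of _ 0])
  have p_root: "poly p (\<alpha> 1) = 0"
  proof -
    have "b 1 \<ge> 1" using b_pos one_in by blast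
    thus ?thesis unfolding polyp using one_in by (intro prod_zero) (auto intro!: bexI[of _ 1])
  qed
  have qa_ne: "poly q (\<alpha> 1) \<noteq> 0" using coprime_roots p_root by blast
  define D where "D = degree p"
  have Dpos: "D > 0"
  proof -
    have "b 1 \<le> (\<Sum>j\<in>{1..m}. b j)" using one_in by (intro member_le_sum) auto
    moreover have "b 1 \<ge> 1" using b_pos one_in by blast
    ultimately show ?thesis by (simp add: D_def degp)
  qed
  have part1: "hausdorff_moment_seq (\<lambda>n. poly q (real n) / poly p (real n)) \<longrightarrow> poly q (\<alpha> 1) > 0"
  proof
    assume H: "hausdorff_moment_seq (\<lambda>n. poly q (real n) / poly p (real n))"
    hence HMx: "HM (\<lambda>n. poly q (real n) / poly p (real n))" by (simp add: hausdorff_iff)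
    have W1: "HM (\<lambda>n. \<Prod>j\<in>{1..m}. ((real n + (- \<alpha> j)) / (real n + a)) ^ b j)"
      by (intro HM_prod HM_power HM_ratio) (use apos aj in auto)
    have y_eq: "poly q (real n) / poly p (real n) * (\<Prod>j\<in>{1..m}. ((real n + (- \<alpha> j)) / (real n + a)) ^ b j)
        = poly q (real n) / (real n + a) ^ D" for n
    proof -
      have "(\<Prod>j\<in>{1..m}. ((real n + (- \<alpha> j)) / (real n + a)) ^ b j)
          = (\<Prod>j\<in>{1..m}. (real n - \<alpha> j) ^ b j) / (\<Prod>j\<in>{1..m}. (real n + a) ^ b j)"
        by (simp add: power_divide prod_dividef)
      also have "(\<Prod>j\<in>{1..m}. (real n + a) ^ b j) = (real n + a) ^ D"
        by (simp add: D_def degp power_sum)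
      finally have "(\<Prod>j\<in>{1..m}. ((real n + (- \<alpha> j)) / (real n + a)) ^ b j) = poly p (real n) / (real n + a) ^ D"
        by (simp add: polyp)
      thus ?thesis using ppos[of n] by simp
    qed
    have HMy: "HM (\<lambda>n. poly q (real n) / (real n + a) ^ D)"
      using HM_mult[OF HMx W1] y_eq by (rule HM_cong)
    have key: "poly q (\<alpha> 1 + \<epsilon>) \<ge> 0" if eps: "0 < \<epsilon>" "\<epsilon> < a" for \<epsilon>
    proof -
      define e where "e = (\<lambda>i::nat. a - \<epsilon> / (real i + 1))"
      have eps_le: "\<epsilon> / (real i + 1) \<le> \<epsilon>" for i using eps by (simp add: field_simps)
      have epos: "e i > 0" for i using eps_le[of i] eps unfolding e_def by simp
      have ele: "e i \<le> a" for i using eps unfolding e_def by simp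
      have e0: "e 0 = a - \<epsilon>" unfolding e_def by simp
      have emin: "e 0 < e i" if "i \<noteq> 0" for i
      proof -
        have "\<epsilon> / (real i + 1) < \<epsilon>" using eps that by (simp add: field_simps)
        thus ?thesis unfolding e_def by simp
      qed
      have inj: "inj_on e {..<D}"
      proof (rule inj_onI)
        fix i l assume "e i = e l"
        hence "\<epsilon> / (real i + 1) = \<epsilon> / (real l + 1)" unfolding e_def by simp
        hence "real i + 1 = real l + 1" using eps by (simp add: field_simps)
        thus "i = l" by simp
      qed
      have W2: "HM (\<lambda>n. \<Prod>i<D. (real n + a) / (real n + e i))"
        by (intro HM_prod HM_ratio) (use epos ele in auto)
      define r where "r = (\<lambda>i. poly q (- e i) / (\<Prod>l\<in>{..<D}-{i}. (e l - e i)))"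
      have z_eq: "poly q (real n) / (real n + a) ^ D * (\<Prod>i<D. (real n + a) / (real n + e i))
          = (\<Sum>i<D. r i / (real n + e i))" for n
      proof -
        have pos: "real n + e i > 0" for i using epos[of i] by simp
        have pa: "real n + a > 0" using apos by simp
        have prodpos: "(\<Prod>i<D. (real n + e i)) \<noteq> 0" using pos by (simp add: prod_zero_iff less_imp_neq[symmetric])
        have "(\<Prod>i<D. (real n + a) / (real n + e i)) = (real n + a) ^ D / (\<Prod>i<D. (real n + e i))"
          by (simp add: prod_dividef)
        hence "poly q (real n) / (real n + a) ^ D * (\<Prod>i<D. (real n + a) / (real n + e i))
            = poly q (real n) / (\<Prod>i<D. (real n + e i))" using pa by simp
        also have "poly q (real n) / (\<Prod>i<D. (real n + e i))
            = (\<Sum>i<D. r i * (\<Prod>l\<in>{..<D}-{i}. (real n + e l)) / (\<Prod>i<D. (real n + e i)))"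
        proof -
          have lag: "poly q (real n) = (\<Sum>i<D. r i * (\<Prod>l\<in>{..<D}-{i}. (real n + e l)))"
            unfolding r_def by (rule lagrange[OF inj deg[folded D_def]])
          show ?thesis by (subst lag) (simp add: sum_divide_distrib)
        qed
        also have "\<dots> = (\<Sum>i<D. r i / (real n + e i))"
        proof (intro sum.cong refl)
          fix i assume i: "i \<in> {..<D}"
          have "(\<Prod>l<D. (real n + e l)) = (real n + e i) * (\<Prod>l\<in>{..<D}-{i}. (real n + e l))"
            using i by (subst prod.remove[of _ i]) auto
          moreover have "(\<Prod>l\<in>{..<D}-{i}. (real n + e l)) \<noteq> 0"
            using pos by (simp add: prod_zero_iff less_imp_neq[symmetric])
          ultimately show "r i * (\<Prod>l\<in>{..<D}-{i}. (real n + e l)) / (\<Prod>l<D. (real n + e l)) = r i / (real n + e i)"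
            using pos[of i] by simp
        qed
        finally show ?thesis .
      qed
      have HMz: "HM (\<lambda>n. \<Sum>i<D. r i / (real n + e i))"
        using HM_mult[OF HMy W2] z_eq by (rule HM_cong)
      have "r 0 \<ge> 0"
        by (rule simple_poles_nonneg[where y="\<lambda>n. \<Sum>i<D. r i / (real n + e i)" and D=D and e=e and r=r])
           (use HMz epos Dpos emin in auto)
      moreover have "(\<Prod>l\<in>{..<D}-{0}. (e l - e 0)) > 0"
        using emin by (intro prod_pos) auto
      ultimately have "poly q (- e 0) \<ge> 0" unfolding r_def by (simp add: zero_le_divide_iff)
      thus ?thesis by (simp add: e0 a_def add.commute)
    qed
    have "poly q (\<alpha> 1) \<ge> 0"
    proof (rule tendsto_lowerbound)
      show "((\<lambda>\<epsilon>. poly q (\<alpha> 1 + \<epsilon>)) \<longlongrightarrow> poly q (\<alpha> 1)) (at_right 0)"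
        by (rule tendsto_eq_intros refl)+ simp
      show "eventually (\<lambda>\<epsilon>. 0 \<le> poly q (\<alpha> 1 + \<epsilon>)) (at_right 0)"
        using eventually_at_right_real[OF apos] by eventually_elim (rule key, auto)
    qed simp
    thus "poly q (\<alpha> 1) > 0" using qa_ne by simp
  qed
  have part2: "(lead_coeff q = 1 \<and> degree q = 1 \<and> poly q (\<alpha> 1) > 0)
            \<longrightarrow> hausdorff_moment_seq (\<lambda>n. poly q (real n) / poly p (real n))"
  proof (intro impI, elim conjE)
    assume lc: "lead_coeff q = 1" and dq: "degree q = 1" and qa: "poly q (\<alpha> 1) > 0"
    define c0 where "c0 = coeff q 0"
    have polyq: "poly q x = x + c0" for x
      using lc dq by (simp add: poly_altdef c0_def)
    have c0a: "c0 > a" using qa polyq[of "\<alpha> 1"] by (simp add: a_def)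
    define A where "A = {1..m} - {1}"
    have finA: "finite A" unfolding A_def by simp
    have Aneg: "\<And>j. j \<in> A \<Longrightarrow> - \<alpha> j > 0" using neg unfolding A_def by auto
    have pdecomp: "poly p (real n) = (real n + a) ^ b 1 * (\<Prod>j\<in>A. (real n - \<alpha> j) ^ b j)" for n
      unfolding polyp A_def a_def using one_in by (subst prod.remove[of _ 1]) auto
    have HMf: "HM (\<lambda>n. ((real n + c0) / (real n + a)) * (1 / (real n + a)) ^ (b 1 - 1)
                  * (\<Prod>j\<in>A. (1 / (real n + (- \<alpha> j))) ^ b j))"
      by (intro HM_mult HM_power HM_prod HM_ratio HM_inv finA Aneg) (use apos c0a in auto)
    have eq: "((real n + c0) / (real n + a)) * (1 / (real n + a)) ^ (b 1 - 1)
                  * (\<Prod>j\<in>A. (1 / (real n + (- \<alpha> j))) ^ b j) = poly q (real n) / poly p (real n)" for n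
    proof -
      have pa: "real n + a > 0" using apos by simp
      have "b 1 \<ge> 1" using b_pos one_in by blast
      hence b1: "b 1 = Suc (b 1 - 1)" by simp
      have "((real n + c0) / (real n + a)) * (1 / (real n + a)) ^ (b 1 - 1) = (real n + c0) / (real n + a) ^ b 1"
        by (subst (2) b1) (simp add: power_one_over)
      moreover have "(\<Prod>j\<in>A. (1 / (real n + (- \<alpha> j))) ^ b j) = 1 / (\<Prod>j\<in>A. (real n - \<alpha> j) ^ b j)"
        by (simp add: power_one_over prod_dividef)
      ultimately show ?thesis by (simp add: pdecomp polyq)
    qed
    have HMx: "HM (\<lambda>n. poly q (real n) / poly p (real n))"
      using HMf eq by (rule HM_cong)
    have posx: "poly q (real n) / poly p (real n) > 0" for n
      using ppos[of n] polyq[of "real n"] c0a apos by simp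
    show "hausdorff_moment_seq (\<lambda>n. poly q (real n) / poly p (real n))"
      using HMx posx by (simp add: hausdorff_iff)
  qed
  show ?thesis using part1 part2 by blast
qed

end
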